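(* Assume Hypothesis 1 (stated in the context). If $\dfrac{|C|}{|C_{\max}|}<\dfrac{m(m-1)}{\delta(\delta-1)}$, then $\delta_{\max}\le 2\delta$.
   Context: $H(m,2)$: vertex set $\mathbb F_2^m$, coordinates indexed by a set $M$, $|M|=m$; $d$ Hamming distance. For a code $C$: minimum distance $\delta$, covering radius $\rho=\max_\alpha d(\alpha,C)$, $C_i=\{\alpha:d(\alpha,C)=i\}$. $\mathrm{Aut}(H(m,2))=B\rtimes L$, $B\cong\mathbb Z_2^m$ translations, $L\cong\mathrm{Sym}(M)$; $\mathrm{Aut}(C)$ is the setwise stabiliser of $C$. $C$ is completely transitive if $\mathrm{Aut}(C)$ is transitive on each of $C,C_1,\dots,C_\rho$. For a linear code $D$, $T_D$ is the group of translations by elements of $D$. For $C\ni\mathbf 0$, the maximal linear subcode $C_{\max}$ is the largest linear subcode $D\subseteq C$ with $T_D\le\mathrm{Aut}(C)$. Hypothesis 1: $C$ is a completely transitive code in $H(m,2)$ with $\mathbf 0\in C$ and minimum distance $\delta\ge5$; $X=\mathrm{Aut}(C)$; $C_{\max}$ is the maximal linear subcode with minimum distance $\delta_{\max}$; $X_{\max}$ is the setwise stabiliser of $C_{\max}$ in $X$; $2\le\dim C_{\max}\le m-2$. *)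

theory Defs
  imports Complex_Main "HOL-Combinatorics.Permutations"
begin

text \<open>The Hamming graph H(m,2): vertices are the elements of F_2^M, represented
  by their supports, i.e. subsets of the finite coordinate set M (m = card M).
  Vector addition is symmetric difference.\<close>

definition vadd :: "'a set \<Rightarrow> 'a set \<Rightarrow> 'a set" where
  "vadd x y = (x - y) \<union> (y - x)"

definition hdist :: "'a set \<Rightarrow> 'a set \<Rightarrow> nat" where
  "hdist x y = card (vadd x y)"

definition vertices :: "'a set \<Rightarrow> 'a set set" where
  "vertices M = Pow M"

definition dist_code :: "'a set set \<Rightarrow> 'a set \<Rightarrow> nat" where
  "dist_code C \<alpha> = Min ((\<lambda>c. hdist \<alpha> c) ` C)"

definition min_distance :: "'a set set \<Rightarrow> nat" where
  "min_distance C = Min {hdist x y | x y. x \<in> C \<and> y \<in> C \<and> x \<noteq> y}"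

definition covering_radius :: "'a set \<Rightarrow> 'a set set \<Rightarrow> nat" where
  "covering_radius M C = Max (dist_code C ` vertices M)"

definition code_layer :: "'a set \<Rightarrow> 'a set set \<Rightarrow> nat \<Rightarrow> 'a set set" where
  "code_layer M C i = {\<alpha> \<in> vertices M. dist_code C \<alpha> = i}"

text \<open>Aut(H(m,2)) = B \<rtimes> L: maps x \<mapsto> \<pi>(x) + b.\<close>
definition hamming_aut :: "'a set \<Rightarrow> ('a set \<Rightarrow> 'a set) set" where
  "hamming_aut M = {g. \<exists>\<pi> b. \<pi> permutes M \<and> b \<subseteq> M \<and> (\<forall>x. g x = vadd (\<pi> ` x) b)}"

definition code_aut :: "'a set \<Rightarrow> 'a set set \<Rightarrow> ('a set \<Rightarrow> 'a set) set" where
  "code_aut M C = {g \<in> hamming_aut M. g ` C = C}"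

definition translation :: "'a set \<Rightarrow> 'a set \<Rightarrow> 'a set" where
  "translation d = (\<lambda>x. vadd x d)"

definition completely_transitive :: "'a set \<Rightarrow> 'a set set \<Rightarrow> bool" where
  "completely_transitive M C \<longleftrightarrow>
     (\<forall>i \<le> covering_radius M C. \<forall>\<alpha> \<in> code_layer M C i. \<forall>\<beta> \<in> code_layer M C i.
        \<exists>g \<in> code_aut M C. g \<alpha> = \<beta>)"

definition linear_code :: "'a set \<Rightarrow> 'a set set \<Rightarrow> bool" where
  "linear_code M D \<longleftrightarrow> D \<subseteq> vertices M \<and> {} \<in> D \<and> (\<forall>x\<in>D. \<forall>y\<in>D. vadd x y \<in> D)"

definition translation_subcode :: "'a set \<Rightarrow> 'a set set \<Rightarrow> 'a set set \<Rightarrow> bool" where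
  "translation_subcode M C D \<longleftrightarrow> linear_code M D \<and> D \<subseteq> C \<and>
     (\<forall>d \<in> D. translation d \<in> code_aut M C)"

definition is_max_linear_subcode :: "'a set \<Rightarrow> 'a set set \<Rightarrow> 'a set set \<Rightarrow> bool" where
  "is_max_linear_subcode M C D \<longleftrightarrow> translation_subcode M C D \<and>
     (\<forall>D'. translation_subcode M C D' \<longrightarrow> D' \<subseteq> D)"

definition code_dim :: "'a set set \<Rightarrow> nat" where
  "code_dim D = (THE k. card D = 2 ^ k)"

end

theory Submission
  imports Defs
begin

lemma vadd_simps:
  "vadd x {} = x" "vadd {} x = x" "vadd x x = {}" "vadd x y = vadd y x"
  "vadd (vadd x y) z = vadd x (vadd y z)"
  by (auto simp: vadd_def)

lemma vadd_cancel: "vadd (vadd a b) (vadd c b) = vadd a c"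
  by (auto simp: vadd_def)

lemma vadd_swap: "vadd i d1 = vadd j d2 \<Longrightarrow> vadd i j = vadd d1 d2"
  unfolding vadd_def by (simp add: set_eq_iff) blast

lemma vadd_inv: "vadd i (vadd i x) = x"
  by (auto simp: vadd_def)

lemma vadd_eq_empty: "vadd x y = {} \<longleftrightarrow> x = y"
  by (auto simp: vadd_def)

lemma card_vadd_le: "finite x \<Longrightarrow> finite y \<Longrightarrow> card (vadd x y) \<le> card x + card y"
  unfolding vadd_def
  by (meson card_Un_le card_mono Diff_subset finite_Diff le_trans add_mono)

lemma hdist_tri:
  assumes "finite x" "finite y" "finite z"
  shows "hdist x z \<le> hdist x y + hdist y z"
proof -
  have "vadd x z \<subseteq> vadd x y \<union> vadd y z" by (auto simp: vadd_def)
  moreover have "finite (vadd x y)" "finite (vadd y z)" using assms by (auto simp: vadd_def)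
  ultimately have "card (vadd x z) \<le> card (vadd x y \<union> vadd y z)"
    by (simp add: card_mono)
  also have "\<dots> \<le> card (vadd x y) + card (vadd y z)" by (rule card_Un_le)
  finally show ?thesis by (simp add: hdist_def)
qed

lemma hdist_sym: "hdist x y = hdist y x"
  by (simp add: hdist_def vadd_simps(4))

lemma hdist_empty: "hdist x {} = card x" "hdist {} x = card x"
  by (simp_all add: hdist_def vadd_simps)

lemma hdist_self: "hdist x x = 0"
  by (simp add: hdist_def vadd_simps)

lemma image_vadd_inj: "inj f \<Longrightarrow> vadd (f ` x) (f ` y) = f ` (vadd x y)"
  unfolding vadd_def by (simp add: image_Un image_set_diff)

lemma hdist_aut:
  assumes "inj f"
  shows "hdist (vadd (f ` x) b) (vadd (f ` y) b) = hdist x y"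
  unfolding hdist_def vadd_cancel image_vadd_inj[OF assms]
  by (simp add: card_image inj_on_subset[OF assms])

theorem lemma2p8:
  fixes M :: "'a set" and C Cmax :: "'a set set" and m :: nat
  assumes "finite M" and "card M = m"
    and "C \<subseteq> vertices M" and "{} \<in> C"
    and "completely_transitive M C"
    and "min_distance C \<ge> 5"
    and "is_max_linear_subcode M C Cmax"
    and "2 \<le> code_dim Cmax" and "code_dim Cmax \<le> m - 2"
    and "real (card C) / real (card Cmax)
           < real (m * (m - 1)) / real (min_distance C * (min_distance C - 1))"
  shows "min_distance Cmax \<le> 2 * min_distance C"
proof -
  define \<delta> where "\<delta> = min_distance C"
  have finV: "finite (vertices M)" using assms(1) by (simp add: vertices_def)
  have finC: "finite C" using assms(3) finV finite_subset by blast
  have CM: "c \<subseteq> M" if "c \<in> C" for c using assms(3) that by (auto simp: vertices_def)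
  have finc: "finite c" if "c \<in> C" for c using CM[OF that] assms(1) finite_subset by blast
  have lin: "linear_code M Cmax" and CmC: "Cmax \<subseteq> C"
    and tr: "\<forall>d\<in>Cmax. translation d \<in> code_aut M C"
    using assms(7) by (auto simp: is_max_linear_subcode_def translation_subcode_def)
  have e0: "{} \<in> Cmax" using lin by (simp add: linear_code_def)
  have finCm: "finite Cmax" using CmC finC finite_subset by blast
  have "card Cmax \<noteq> 1"
  proof
    assume "card Cmax = 1"
    then have "code_dim Cmax = 0" unfolding code_dim_def
      by (intro the_equality) auto
    then show False using assms(8) by simp
  qed
  moreover have "card Cmax \<ge> 1" using e0 finCm by (metis card_0_eq empty_iff less_one not_le)
  ultimately have "card Cmax \<ge> 2" by simp
  then obtain x0 where x0: "x0 \<in> Cmax" "x0 \<noteq> {}"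
    using e0 by (metis card_le_Suc0_iff_eq finCm not_less_eq_eq numeral_2_eq_2)
  define S where "S = {hdist x y | x y. x \<in> C \<and> y \<in> C \<and> x \<noteq> y}"
  have finS: "finite S"
  proof -
    have "S \<subseteq> (\<lambda>(x,y). hdist x y) ` (C \<times> C)" by (auto simp: S_def)
    then show ?thesis using finC finite_subset by blast
  qed
  have Sne: "S \<noteq> {}" using x0 e0 CmC unfolding S_def by blast
  have \<delta>S: "\<delta> \<in> S" unfolding \<delta>_def min_distance_def S_def[symmetric] using finS Sne by (rule Min_in)
  have \<delta>le: "\<delta> \<le> hdist x y" if "x \<in> C" "y \<in> C" "x \<noteq> y" for x y
    unfolding \<delta>_def min_distance_def S_def[symmetric] using finS that
    by (intro Min_le) (auto simp: S_def)
  have \<delta>5: "\<delta> \<ge> 5" using assms(6) by (simp add: \<delta>_def)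
  have wt: "card c \<ge> \<delta>" if "c \<in> C" "c \<noteq> {}" for c
    using \<delta>le[OF that(1) assms(4) that(2)] by (simp add: hdist_empty)
  have cr0: "0 \<le> covering_radius M C" by simp
  have layer0: "c \<in> code_layer M C 0" if "c \<in> C" for c
  proof -
    have "dist_code C c = 0" unfolding dist_code_def
      using finC that by (metis Min_le finite_imageI hdist_self image_eqI le_zero_eq)
    then show ?thesis using that assms(3) by (auto simp: code_layer_def)
  qed
  have ct: "\<forall>i \<le> covering_radius M C. \<forall>\<alpha> \<in> code_layer M C i. \<forall>\<beta> \<in> code_layer M C i.
        \<exists>g \<in> code_aut M C. g \<alpha> = \<beta>" using assms(5) by (simp add: completely_transitive_def)
  obtain x y where xy: "x \<in> C" "y \<in> C" "x \<noteq> y" "hdist x y = \<delta>" using \<delta>S by (auto simp: S_def)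
  obtain g where g: "g \<in> code_aut M C" "g x = {}"
    using ct cr0 layer0[OF xy(1)] layer0[OF assms(4)] by blast
  from g(1) obtain \<pi> b where pb: "\<pi> permutes M" "b \<subseteq> M" "\<forall>z. g z = vadd (\<pi> ` z) b" "g ` C = C"
    by (auto simp: code_aut_def hamming_aut_def)
  have injpi: "inj \<pi>" using pb(1) by (simp add: permutes_inj)
  define w0 where "w0 = g y"
  have w0C: "w0 \<in> C" using pb(4) xy(2) w0_def by blast
  have "hdist (g x) (g y) = hdist x y" using pb(3) hdist_aut[OF injpi] by simp
  then have cw0: "card w0 = \<delta>" using g(2) xy(4) w0_def by (simp add: hdist_empty)
  have pair2: "p \<in> code_layer M C 2" if "p \<subseteq> M" "card p = 2" for p
  proof -
    have finp: "finite p" using that assms(1) finite_subset by blast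
    have A: "2 \<in> hdist p ` C" using assms(4) that by (force simp: hdist_empty)
    have B: "2 \<le> hdist p c" if "c \<in> C" for c
    proof (cases "c = {}")
      case True then show ?thesis using \<open>card p = 2\<close> by (simp add: hdist_empty)
    next
      case False
      have "hdist {} c \<le> hdist {} p + hdist p c" using finp finc[OF that] by (intro hdist_tri) auto
      then show ?thesis using wt[OF that False] \<open>card p = 2\<close> \<delta>5 by (simp add: hdist_empty)
    qed
    have "dist_code C p = 2" unfolding dist_code_def
    proof (rule antisym)
      show "Min (hdist p ` C) \<le> 2" using A finC by (intro Min_le) auto
      show "2 \<le> Min (hdist p ` C)" using A B finC by (subst Min_ge_iff) auto
    qed
    then show ?thesis using that by (auto simp: code_layer_def vertices_def)
  qed
  have cr2: "2 \<le> covering_radius M C"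
  proof -
    have "card w0 \<ge> 2" using cw0 \<delta>5 by simp
    then obtain p where "p \<subseteq> w0" "card p = 2" by (meson obtain_subset_with_card_n)
    then have "p \<in> code_layer M C 2" using pair2 CM[OF w0C] by blast
    then have "dist_code C p \<in> dist_code C ` vertices M" "dist_code C p = 2"
      by (auto simp: code_layer_def)
    then show ?thesis unfolding covering_radius_def using finV by (metis Max_ge finite_imageI)
  qed
  obtain p0 where p0: "p0 \<subseteq> w0" "card p0 = 2"
  proof -
    have "2 \<le> card w0" using cw0 \<delta>5 by simp
    then show ?thesis using that by (meson obtain_subset_with_card_n)
  qed
  define W where "W = {c \<in> C. card c = \<delta>}"
  have finW: "finite W" using finC by (simp add: W_def)
  have cover: "\<exists>w\<in>W. p \<subseteq> w" if pM: "p \<subseteq> M" "card p = 2" for p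
  proof -
    obtain h where h: "h \<in> code_aut M C" "h p0 = p"
    proof -
      have "p0 \<in> code_layer M C 2" using pair2[OF _ p0(2)] p0(1) CM[OF w0C] by blast
      then show ?thesis using ct cr2 pair2[OF pM] that by blast
    qed
    from h(1) obtain \<sigma> c where sc: "\<sigma> permutes M" "c \<subseteq> M" "\<forall>z. h z = vadd (\<sigma> ` z) c" "h ` C = C"
      by (auto simp: code_aut_def hamming_aut_def)
    have injs: "inj \<sigma>" using sc(1) by (simp add: permutes_inj)
    have cC: "c \<in> C" using sc(3,4) assms(4) by (metis image_empty image_eqI vadd_simps(2))
    have "hdist (h p0) (h {}) = hdist p0 {}" using sc(3) hdist_aut[OF injs, of p0 c "{}"] by simp
    then have d2: "hdist p c = 2" using h(2) sc(3) p0(2) by (simp add: hdist_empty vadd_simps)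
    have "c = {}"
    proof (rule ccontr)
      assume "c \<noteq> {}"
      have finp: "finite p" using that assms(1) finite_subset by blast
      have "hdist {} c \<le> hdist {} p + hdist p c" using finp finc[OF cC] by (intro hdist_tri) auto
      then show False using wt[OF cC \<open>c \<noteq> {}\<close>] d2 \<open>card p = 2\<close> \<delta>5 by (simp add: hdist_empty)
    qed
    then have hz: "h z = \<sigma> ` z" for z using sc(3) by (simp add: vadd_simps)
    have "\<sigma> ` w0 \<in> C" using sc(4) w0C hz by (metis image_eqI)
    moreover have "card (\<sigma> ` w0) = \<delta>" using cw0 injs by (simp add: card_image inj_on_subset)
    moreover have "p \<subseteq> \<sigma> ` w0" using h(2) hz p0(1) by auto
    ultimately show ?thesis by (auto simp: W_def)
  qed
  have "{p. p \<subseteq> M \<and> card p = 2} \<subseteq> (\<Union>w\<in>W. {p. p \<subseteq> w \<and> card p = 2})"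
    using cover by blast
  then have "card {p. p \<subseteq> M \<and> card p = 2} \<le> card (\<Union>w\<in>W. {p. p \<subseteq> w \<and> card p = 2})"
    using finW finc by (intro card_mono) (auto simp: W_def)
  also have "\<dots> \<le> (\<Sum>w\<in>W. card {p. p \<subseteq> w \<and> card p = 2})" using finW by (rule card_UN_le)
  also have "\<dots> = (\<Sum>w\<in>W. \<delta> choose 2)"
    using finc by (intro sum.cong) (auto simp: W_def n_subsets)
  finally have cnt: "m choose 2 \<le> card W * (\<delta> choose 2)"
    using n_subsets[OF assms(1)] assms(2) by simp
  have twice: "2 * (n choose 2) = n * (n - 1)" for n :: nat
  proof -
    have "even (n * (n - 1))" by (cases n) auto
    then show ?thesis by (simp add: choose_two)
  qed
  have cnt2: "m * (m - 1) \<le> card W * (\<delta> * (\<delta> - 1))"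
    using cnt twice[of m] twice[of \<delta>] by (metis mult.left_commute mult_le_mono2)
  \<comment> \<open>pigeonhole on cosets\<close>
  have transl: "vadd c d \<in> C" if "c \<in> C" "d \<in> Cmax" for c d
  proof -
    have "translation d ` C = C" using tr that(2) by (simp add: code_aut_def)
    then show ?thesis using that(1) by (metis image_eqI translation_def)
  qed
  obtain w1 w2 where w12: "w1 \<in> W" "w2 \<in> W" "w1 \<noteq> w2" "vadd w1 w2 \<in> Cmax"
  proof (rule ccontr)
    assume nex: "\<not> thesis"
    have disj: "\<forall>i\<in>W. \<forall>j\<in>W. i \<noteq> j \<longrightarrow> vadd i ` Cmax \<inter> vadd j ` Cmax = {}"
    proof (intro ballI impI)
      fix i j assume ij: "i \<in> W" "j \<in> W" "i \<noteq> j"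
      show "vadd i ` Cmax \<inter> vadd j ` Cmax = {}"
      proof (rule ccontr)
        assume "vadd i ` Cmax \<inter> vadd j ` Cmax \<noteq> {}"
        then obtain d1 d2 where d: "d1 \<in> Cmax" "d2 \<in> Cmax" "vadd i d1 = vadd j d2" by blast
        have "vadd i j = vadd d1 d2" using d(3)
          by (rule vadd_swap)
        then have "vadd i j \<in> Cmax" using lin d(1,2) by (simp add: linear_code_def)
        then show False using nex that ij by blast
      qed
    qed
    have injv: "inj (vadd i)" for i :: "'a set"
      by (metis injI vadd_inv)
    have "card (\<Union>i\<in>W. vadd i ` Cmax) = (\<Sum>i\<in>W. card (vadd i ` Cmax))"
      using finW finCm disj by (intro card_UN_disjoint) auto
    also have "\<dots> = card W * card Cmax"
    proof -
      have "card (vadd i ` Cmax) = card Cmax" for i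
        using injv[of i] by (simp add: card_image inj_on_subset)
      then show ?thesis by simp
    qed
    finally have "card W * card Cmax = card (\<Union>i\<in>W. vadd i ` Cmax)" by simp
    also have "\<dots> \<le> card C"
      using finC transl by (intro card_mono) (auto simp: W_def)
    finally have le: "card W * card Cmax \<le> card C" .
    have pos: "real (card Cmax) > 0" using \<open>card Cmax \<ge> 2\<close> by simp
    have dpos: "real (\<delta> * (\<delta> - 1)) > 0" using \<delta>5 by simp
    have "real (m * (m - 1)) / real (\<delta> * (\<delta> - 1)) \<le> real (card W)"
    proof -
      have "real (m * (m - 1)) \<le> real (card W) * real (\<delta> * (\<delta> - 1))"
        using cnt2 by (metis of_nat_le_iff of_nat_mult)
      then show ?thesis using dpos by (simp only: divide_le_eq) simp
    qed
    also have "\<dots> \<le> real (card C) / real (card Cmax)"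
    proof -
      have "real (card W) * real (card Cmax) \<le> real (card C)"
        using le by (metis of_nat_le_iff of_nat_mult)
      then show ?thesis using pos by (simp only: le_divide_eq) simp
    qed
    finally show False using assms(10) by (simp add: \<delta>_def)
  qed
  have "card (vadd w1 w2) \<le> card w1 + card w2"
    using w12 finc by (intro card_vadd_le) (auto simp: W_def)
  then have c12: "card (vadd w1 w2) \<le> 2 * \<delta>" using w12 by (simp add: W_def)
  have "min_distance Cmax \<le> hdist (vadd w1 w2) {}"
    unfolding min_distance_def
  proof (rule Min_le)
    have "{hdist x y |x y. x \<in> Cmax \<and> y \<in> Cmax \<and> x \<noteq> y} \<subseteq> (\<lambda>(x,y). hdist x y) ` (Cmax \<times> Cmax)"
      by auto
    then show "finite {hdist x y |x y. x \<in> Cmax \<and> y \<in> Cmax \<and> x \<noteq> y}"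
      using finCm finite_subset by blast
    show "hdist (vadd w1 w2) {} \<in> {hdist x y |x y. x \<in> Cmax \<and> y \<in> Cmax \<and> x \<noteq> y}"
    proof -
      have "vadd w1 w2 \<noteq> {}" using w12(3) vadd_eq_empty by metis
      then show ?thesis using w12(4) e0 by blast
    qed
  qed
  then show ?thesis using c12 by (simp add: hdist_empty \<delta>_def)
qed

end
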